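(* For any connected graphs $G$ and $H$, $v_s(G)\,v_s(H) \le Z(G \Box H)$.
   Context: A strong support vertex is a vertex adjacent to at least two leaves; $v_s(G)$ is the number of strong support vertices of $G$. Zero forcing: starting from a set $Z \subseteq V(G)$ of observed vertices, repeatedly any vertex that is the only unobserved neighbor of some observed vertex becomes observed; $Z$ is a zero forcing set if eventually all vertices are observed, and $Z(G)$ is the minimum size of a zero forcing set. $G\Box H$ is the Cartesian product: vertex set $V(G)\times V(H)$, with $(g_1,h_1)\sim(g_2,h_2)$ iff ($g_1=g_2$ and $h_1h_2\in E(H)$) or ($h_1=h_2$ and $g_1g_2\in E(G)$). *)

theory Defs
  imports Main
begin

definition graph :: "'a set \<Rightarrow> ('a \<Rightarrow> 'a \<Rightarrow> bool) \<Rightarrow> bool" where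
  "graph V E \<longleftrightarrow> finite V \<and> V \<noteq> {} \<and>
     (\<forall>x y. E x y \<longrightarrow> x \<in> V \<and> y \<in> V \<and> x \<noteq> y \<and> E y x)"

definition connected_graph :: "'a set \<Rightarrow> ('a \<Rightarrow> 'a \<Rightarrow> bool) \<Rightarrow> bool" where
  "connected_graph V E \<longleftrightarrow> graph V E \<and> (\<forall>x\<in>V. \<forall>y\<in>V. E\<^sup>*\<^sup>* x y)"

definition nbrs :: "'a set \<Rightarrow> ('a \<Rightarrow> 'a \<Rightarrow> bool) \<Rightarrow> 'a \<Rightarrow> 'a set" where
  "nbrs V E v = {u \<in> V. E v u}"

definition leaf :: "'a set \<Rightarrow> ('a \<Rightarrow> 'a \<Rightarrow> bool) \<Rightarrow> 'a \<Rightarrow> bool" where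
  "leaf V E v \<longleftrightarrow> v \<in> V \<and> card (nbrs V E v) = 1"

definition strong_support :: "'a set \<Rightarrow> ('a \<Rightarrow> 'a \<Rightarrow> bool) \<Rightarrow> 'a \<Rightarrow> bool" where
  "strong_support V E v \<longleftrightarrow> v \<in> V \<and> card {u \<in> nbrs V E v. leaf V E u} \<ge> 2"

definition num_strong_support :: "'a set \<Rightarrow> ('a \<Rightarrow> 'a \<Rightarrow> bool) \<Rightarrow> nat" where
  "num_strong_support V E = card {v \<in> V. strong_support V E v}"

inductive_set observed :: "'a set \<Rightarrow> ('a \<Rightarrow> 'a \<Rightarrow> bool) \<Rightarrow> 'a set \<Rightarrow> 'a set"
  for V E Z where
  init: "z \<in> Z \<Longrightarrow> z \<in> observed V E Z"
| force: "u \<in> observed V E Z \<Longrightarrow> w \<in> nbrs V E u \<Longrightarrow>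
           (\<And>x. x \<in> nbrs V E u \<Longrightarrow> x \<noteq> w \<Longrightarrow> x \<in> observed V E Z) \<Longrightarrow>
           w \<in> observed V E Z"

definition zero_forcing_set :: "'a set \<Rightarrow> ('a \<Rightarrow> 'a \<Rightarrow> bool) \<Rightarrow> 'a set \<Rightarrow> bool" where
  "zero_forcing_set V E Z \<longleftrightarrow> Z \<subseteq> V \<and> V \<subseteq> observed V E Z"

definition zero_forcing_number :: "'a set \<Rightarrow> ('a \<Rightarrow> 'a \<Rightarrow> bool) \<Rightarrow> nat" where
  "zero_forcing_number V E = (LEAST k. \<exists>Z. zero_forcing_set V E Z \<and> card Z = k)"

definition cart_adj :: "'a set \<Rightarrow> ('a \<Rightarrow> 'a \<Rightarrow> bool) \<Rightarrow> 'b set \<Rightarrow> ('b \<Rightarrow> 'b \<Rightarrow> bool)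
    \<Rightarrow> ('a \<times> 'b) \<Rightarrow> ('a \<times> 'b) \<Rightarrow> bool" where
  "cart_adj V1 E1 V2 E2 p q \<longleftrightarrow>
     (fst p = fst q \<and> fst p \<in> V1 \<and> E2 (snd p) (snd q)) \<or>
     (snd p = snd q \<and> snd p \<in> V2 \<and> E1 (fst p) (fst q))"

end

theory Submission
  imports Defs
begin

lemma key:
  assumes H: "\<And>w u. w \<in> Q \<Longrightarrow> w \<in> nbrs V E u \<Longrightarrow> \<exists>x\<in>nbrs V E u. x \<in> Q \<and> x \<noteq> w"
  shows "x \<in> observed V E Z \<Longrightarrow> x \<in> Q \<Longrightarrow> Q \<inter> Z \<noteq> {}"
proof (induction x rule: observed.induct)
  case (init z) then show ?case by blast
next
  case (force u w)
  from H[OF force.prems force.hyps(2)] obtain x where "x \<in> nbrs V E u" "x \<in> Q" "x \<noteq> w" by blast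
  then show ?case using force by blast
qed

lemma leaf_nb:
  assumes g: "graph V E" and l: "leaf V E l" and s: "l \<in> nbrs V E s" and e: "E l y"
  shows "y = s"
proof -
  have "E s l" "s \<in> V" "l \<in> V" using s g by (auto simp: nbrs_def graph_def)
  hence "E l s" using g by (auto simp: graph_def)
  hence "s \<in> nbrs V E l" "y \<in> nbrs V E l" using \<open>s \<in> V\<close> e g by (auto simp: nbrs_def graph_def)
  moreover have "card (nbrs V E l) = 1" using l by (simp add: leaf_def)
  ultimately show ?thesis by (metis card_1_singletonE singletonD)
qed

lemma two_elems:
  assumes "2 \<le> card S"
  shows "\<exists>a b. a \<in> S \<and> b \<in> S \<and> a \<noteq> b"
proof -
  have f: "finite S" and "S \<noteq> {}" using assms by (auto intro: ccontr)
  then obtain a where a: "a \<in> S" by blast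
  have "card (S - {a}) = card S - 1" using f a by simp
  have "S - {a} \<noteq> {}"
  proof
    assume "S - {a} = {}"
    hence "S \<subseteq> {a}" by blast
    hence "card S \<le> card {a}" by (intro card_mono) auto
    thus False using assms by simp
  qed
  then obtain b where "b \<in> S - {a}" by blast
  then show ?thesis using a by blast
qed

lemma two_leaves:
  assumes "strong_support V E s"
  shows "\<exists>a b. a \<noteq> b \<and> a \<in> nbrs V E s \<and> b \<in> nbrs V E s \<and> leaf V E a \<and> leaf V E b"
proof -
  have "card {u \<in> nbrs V E s. leaf V E u} \<ge> 2" using assms by (simp add: strong_support_def)
  from two_elems[OF this] show ?thesis by blast
qed

theorem corollary3p6:
  fixes V1 :: "'a set" and E1 :: "'a \<Rightarrow> 'a \<Rightarrow> bool"
    and V2 :: "'b set" and E2 :: "'b \<Rightarrow> 'b \<Rightarrow> bool"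
  assumes "connected_graph V1 E1" and "connected_graph V2 E2"
  shows "num_strong_support V1 E1 * num_strong_support V2 E2
           \<le> zero_forcing_number (V1 \<times> V2) (cart_adj V1 E1 V2 E2)"
proof -
  have g1: "graph V1 E1" and g2: "graph V2 E2" using assms unfolding connected_graph_def by blast+
  define P where "P = cart_adj V1 E1 V2 E2"
  define S1 where "S1 = {v \<in> V1. strong_support V1 E1 v}"
  define S2 where "S2 = {v \<in> V2. strong_support V2 E2 v}"
  define L where "L s = (SOME ab. fst ab \<noteq> snd ab \<and> fst ab \<in> nbrs V1 E1 s \<and> snd ab \<in> nbrs V1 E1 s
      \<and> leaf V1 E1 (fst ab) \<and> leaf V1 E1 (snd ab))" for s
  define M where "M t = (SOME ab. fst ab \<noteq> snd ab \<and> fst ab \<in> nbrs V2 E2 t \<and> snd ab \<in> nbrs V2 E2 t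
      \<and> leaf V2 E2 (fst ab) \<and> leaf V2 E2 (snd ab))" for t
  have L: "fst (L s) \<noteq> snd (L s) \<and> fst (L s) \<in> nbrs V1 E1 s \<and> snd (L s) \<in> nbrs V1 E1 s
      \<and> leaf V1 E1 (fst (L s)) \<and> leaf V1 E1 (snd (L s))" if "s \<in> S1" for s
  proof -
    from two_leaves[of V1 E1 s] that obtain a b where "a \<noteq> b \<and> a \<in> nbrs V1 E1 s \<and> b \<in> nbrs V1 E1 s \<and> leaf V1 E1 a \<and> leaf V1 E1 b"
      by (auto simp: S1_def)
    hence "\<exists>ab. fst ab \<noteq> snd ab \<and> fst ab \<in> nbrs V1 E1 s \<and> snd ab \<in> nbrs V1 E1 s
      \<and> leaf V1 E1 (fst ab) \<and> leaf V1 E1 (snd ab)" by (intro exI[of _ "(a,b)"]) simp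
    then show ?thesis unfolding L_def by (rule someI_ex)
  qed
  have M: "fst (M s) \<noteq> snd (M s) \<and> fst (M s) \<in> nbrs V2 E2 s \<and> snd (M s) \<in> nbrs V2 E2 s
      \<and> leaf V2 E2 (fst (M s)) \<and> leaf V2 E2 (snd (M s))" if "s \<in> S2" for s
  proof -
    from two_leaves[of V2 E2 s] that obtain a b where "a \<noteq> b \<and> a \<in> nbrs V2 E2 s \<and> b \<in> nbrs V2 E2 s \<and> leaf V2 E2 a \<and> leaf V2 E2 b"
      by (auto simp: S2_def)
    hence "\<exists>ab. fst ab \<noteq> snd ab \<and> fst ab \<in> nbrs V2 E2 s \<and> snd ab \<in> nbrs V2 E2 s
      \<and> leaf V2 E2 (fst ab) \<and> leaf V2 E2 (snd ab)" by (intro exI[of _ "(a,b)"]) simp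
    then show ?thesis unfolding M_def by (rule someI_ex)
  qed
  define Q where "Q st = {fst (L (fst st)), snd (L (fst st))} \<times> {fst (M (snd st)), snd (M (snd st))}" for st
  have bound: "card S1 * card S2 \<le> card Z" if zf: "zero_forcing_set (V1 \<times> V2) P Z" for Z
  proof -
    have fin: "finite Z" using zf g1 g2 unfolding zero_forcing_set_def graph_def
      by (meson finite_SigmaI finite_subset)
    have hit: "Q st \<inter> Z \<noteq> {}" if st: "st \<in> S1 \<times> S2" for st
    proof -
      obtain s t where stdef: "st = (s,t)" "s \<in> S1" "t \<in> S2" using st by auto
      obtain l1 l2 where ll: "L s = (l1,l2)" by (cases "L s")
      obtain m1 m2 where mm: "M t = (m1,m2)" by (cases "M t")
      have Ls: "l1 \<noteq> l2" "l1 \<in> nbrs V1 E1 s" "l2 \<in> nbrs V1 E1 s" "leaf V1 E1 l1" "leaf V1 E1 l2"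
        using L[OF stdef(2)] ll by auto
      have Mt: "m1 \<noteq> m2" "m1 \<in> nbrs V2 E2 t" "m2 \<in> nbrs V2 E2 t" "leaf V2 E2 m1" "leaf V2 E2 m2"
        using M[OF stdef(3)] mm by auto
      have Qe: "Q st = {l1,l2} \<times> {m1,m2}" using stdef ll mm by (simp add: Q_def)
      have sV: "s \<in> V1" "t \<in> V2" using stdef by (auto simp: S1_def S2_def)
      have lV: "l1 \<in> V1" "l2 \<in> V1" "m1 \<in> V2" "m2 \<in> V2" using Ls Mt by (auto simp: nbrs_def)
      have Es: "E1 s l1" "E1 s l2" "E2 t m1" "E2 t m2" using Ls Mt by (auto simp: nbrs_def)
      have a1: "y = s" if "a \<in> {l1,l2}" "E1 a y" for a y
        using that leaf_nb[OF g1] Ls by blast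
      have a2: "y = t" if "b \<in> {m1,m2}" "E2 b y" for b y
        using that leaf_nb[OF g2] Mt by blast
      have sym1: "E1 y x" if "E1 x y" for x y using that g1 by (auto simp: graph_def)
      have sym2: "E2 y x" if "E2 x y" for x y using that g2 by (auto simp: graph_def)
      have H: "\<exists>x\<in>nbrs (V1 \<times> V2) P u. x \<in> Q st \<and> x \<noteq> w"
        if w: "w \<in> Q st" and wu: "w \<in> nbrs (V1 \<times> V2) P u" for w u
      proof -
        obtain a b where ab: "w = (a,b)" "a \<in> {l1,l2}" "b \<in> {m1,m2}" using w Qe by auto
        obtain a' where a': "a' \<in> {l1,l2}" "a' \<noteq> a" using Ls(1) ab(2) by auto
        obtain b' where b': "b' \<in> {m1,m2}" "b' \<noteq> b" using Mt(1) ab(3) by auto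
        have Pu: "P u (a,b)" using wu ab by (auto simp: nbrs_def)
        from Pu consider "fst u = a" "fst u \<in> V1" "E2 (snd u) b" | "snd u = b" "snd u \<in> V2" "E1 (fst u) a"
          by (auto simp: P_def cart_adj_def)
        then show ?thesis
        proof cases
          case 1
          have "snd u = t" using a2[OF ab(3) sym2[OF 1(3)]] .
          hence "(a,b') \<in> nbrs (V1 \<times> V2) P u" using 1 b' Es lV ab
            by (auto simp: nbrs_def P_def cart_adj_def)
          then show ?thesis using ab a' b' Qe by auto
        next
          case 2
          have "fst u = s" using a1[OF ab(2) sym1[OF 2(3)]] .
          hence "(a',b) \<in> nbrs (V1 \<times> V2) P u" using 2 a' Es lV ab
            by (auto simp: nbrs_def P_def cart_adj_def)
          then show ?thesis using ab a' b' Qe by auto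
        qed
      qed
      have "(l1,m1) \<in> observed (V1 \<times> V2) P Z" using zf lV by (auto simp: zero_forcing_set_def)
      then show ?thesis using key[of "Q st" "V1 \<times> V2" P, OF H] Qe by auto
    qed
    define f where "f st = (SOME z. z \<in> Q st \<inter> Z)" for st
    have fQ: "f st \<in> Q st \<inter> Z" if "st \<in> S1 \<times> S2" for st
      using hit[OF that] unfolding f_def by (meson ex_in_conv someI_ex)
    have uniq1: "s = s'" if "s \<in> S1" "s' \<in> S1" "a \<in> {fst (L s), snd (L s)}" "a \<in> {fst (L s'), snd (L s')}" for s s' a
    proof -
      have "leaf V1 E1 a" "a \<in> nbrs V1 E1 s" "a \<in> nbrs V1 E1 s'" using that L by auto
      hence "E1 a s" "E1 a s'" using g1 by (auto simp: nbrs_def graph_def)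
      then show ?thesis using leaf_nb[OF g1 \<open>leaf V1 E1 a\<close> \<open>a \<in> nbrs V1 E1 s\<close>] by blast
    qed
    have uniq2: "s = s'" if "s \<in> S2" "s' \<in> S2" "a \<in> {fst (M s), snd (M s)}" "a \<in> {fst (M s'), snd (M s')}" for s s' a
    proof -
      have "leaf V2 E2 a" "a \<in> nbrs V2 E2 s" "a \<in> nbrs V2 E2 s'" using that M by auto
      hence "E2 a s" "E2 a s'" using g2 by (auto simp: nbrs_def graph_def)
      then show ?thesis using leaf_nb[OF g2 \<open>leaf V2 E2 a\<close> \<open>a \<in> nbrs V2 E2 s\<close>] by blast
    qed
    have "inj_on f (S1 \<times> S2)"
    proof (rule inj_onI)
      fix x y assume x: "x \<in> S1 \<times> S2" and y: "y \<in> S1 \<times> S2" and e: "f x = f y"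
      have "f x \<in> Q x" "f x \<in> Q y" using fQ[OF x] fQ[OF y] e by auto
      hence "fst (f x) \<in> {fst (L (fst x)), snd (L (fst x))}" "fst (f x) \<in> {fst (L (fst y)), snd (L (fst y))}"
        "snd (f x) \<in> {fst (M (snd x)), snd (M (snd x))}" "snd (f x) \<in> {fst (M (snd y)), snd (M (snd y))}"
        unfolding Q_def by (auto simp: mem_Times_iff)
      hence "fst x = fst y" "snd x = snd y"
        using uniq1[of "fst x" "fst y" "fst (f x)"] uniq2[of "snd x" "snd y" "snd (f x)"] x y
        by (simp_all add: mem_Times_iff)
      then show "x = y" by (simp add: prod_eq_iff)
    qed
    moreover have "f ` (S1 \<times> S2) \<subseteq> Z" using fQ by auto
    ultimately have "card (S1 \<times> S2) \<le> card Z" using fin card_inj_on_le by blast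
    then show ?thesis by (simp add: card_cartesian_product)
  qed
  have ex: "\<exists>Z. zero_forcing_set (V1 \<times> V2) P Z \<and> card Z = card (V1 \<times> V2)"
    by (auto simp: zero_forcing_set_def intro: observed.init)
  obtain Z where "zero_forcing_set (V1 \<times> V2) P Z" "card Z = zero_forcing_number (V1 \<times> V2) P"
    using LeastI_ex[of "\<lambda>k. \<exists>Z. zero_forcing_set (V1 \<times> V2) P Z \<and> card Z = k", OF exI, OF ex]
    unfolding zero_forcing_number_def by blast
  then show ?thesis using bound unfolding num_strong_support_def S1_def S2_def P_def by metis
qed

end
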